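(* Let $G$ be a connected graph containing $t'$ pairwise vertex-disjoint triangles. Then $rc(L(G))\leq n_2-t'$, where $n_2$ is the number of vertices of $G$ of degree at least $2$. Moreover, the bound is sharp: for every positive integer $t'$ there exists a connected graph $G$ with $t'$ pairwise vertex-disjoint triangles such that $rc(L(G))=n_2-t'$.
   Context: All graphs are simple, finite and undirected. $L(G)$ is the line graph of $G$. For an edge-colouring of a graph (adjacent edges may receive the same colour), a path is rainbow if no two of its edges have the same colour; the graph is rainbow connected if every two vertices are joined by a rainbow path. The rainbow connection number $rc(H)$ of a connected graph $H$ is the smallest number of colours in an edge-colouring making $H$ rainbow connected. *)

theory Defs
  imports Main
begin

definition simple_graph :: "'v set \<Rightarrow> 'v set set \<Rightarrow> bool" where
  "simple_graph V E \<longleftrightarrow> finite V \<and> (\<forall>e\<in>E. e \<subseteq> V \<and> card e = 2)"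

definition path_edges :: "'v list \<Rightarrow> 'v set list" where
  "path_edges xs = map (\<lambda>i. {xs ! i, xs ! Suc i}) [0..<length xs - 1]"

definition is_path :: "'v set \<Rightarrow> 'v set set \<Rightarrow> 'v list \<Rightarrow> 'v \<Rightarrow> 'v \<Rightarrow> bool" where
  "is_path V E xs u v \<longleftrightarrow> xs \<noteq> [] \<and> hd xs = u \<and> last xs = v \<and> distinct xs
     \<and> set xs \<subseteq> V \<and> set (path_edges xs) \<subseteq> E"

definition connected_graph :: "'v set \<Rightarrow> 'v set set \<Rightarrow> bool" where
  "connected_graph V E \<longleftrightarrow> V \<noteq> {} \<and> (\<forall>u\<in>V. \<forall>v\<in>V. \<exists>xs. is_path V E xs u v)"

definition degree :: "'v set set \<Rightarrow> 'v \<Rightarrow> nat" where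
  "degree E v = card {e\<in>E. v \<in> e}"

definition n2 :: "'v set \<Rightarrow> 'v set set \<Rightarrow> nat" where
  "n2 V E = card {v\<in>V. degree E v \<ge> 2}"

definition line_graph_edges :: "'v set set \<Rightarrow> 'v set set set" where
  "line_graph_edges E = {{e, f} | e f. e \<in> E \<and> f \<in> E \<and> e \<noteq> f \<and> e \<inter> f \<noteq> {}}"

definition rainbow_path :: "'v set \<Rightarrow> 'v set set \<Rightarrow> ('v set \<Rightarrow> nat) \<Rightarrow> 'v list \<Rightarrow> 'v \<Rightarrow> 'v \<Rightarrow> bool" where
  "rainbow_path V E c xs u v \<longleftrightarrow> is_path V E xs u v \<and> distinct (map c (path_edges xs))"

definition rainbow_connected :: "'v set \<Rightarrow> 'v set set \<Rightarrow> ('v set \<Rightarrow> nat) \<Rightarrow> bool" where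
  "rainbow_connected V E c \<longleftrightarrow> (\<forall>u\<in>V. \<forall>v\<in>V. \<exists>xs. rainbow_path V E c xs u v)"

definition rc :: "'v set \<Rightarrow> 'v set set \<Rightarrow> nat" where
  "rc V E = (LEAST k. \<exists>c. (\<forall>e\<in>E. c e < k) \<and> rainbow_connected V E c)"

definition triangle :: "'v set set \<Rightarrow> 'v set \<Rightarrow> bool" where
  "triangle E T \<longleftrightarrow> card T = 3 \<and> (\<forall>x\<in>T. \<forall>y\<in>T. x \<noteq> y \<longrightarrow> {x, y} \<in> E)"

definition disjoint_triangles :: "'v set \<Rightarrow> 'v set set \<Rightarrow> 'v set set \<Rightarrow> nat \<Rightarrow> bool" where
  "disjoint_triangles V E Ts t \<longleftrightarrow> card Ts = t \<and> (\<forall>T\<in>Ts. T \<subseteq> V \<and> triangle E T)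
     \<and> (\<forall>T\<in>Ts. \<forall>T'\<in>Ts. T \<noteq> T' \<longrightarrow> T \<inter> T' = {})"

end

theory Submission
  imports Defs
begin


definition gpath :: "'v set set \<Rightarrow> 'v list \<Rightarrow> bool" where
  "gpath E xs \<longleftrightarrow> xs \<noteq> [] \<and> distinct xs \<and> (\<forall>i. Suc i < length xs \<longrightarrow> {xs!i, xs!Suc i} \<in> E)"

lemma set_path_edges: "set (path_edges xs) = {{xs!i, xs!Suc i} | i. Suc i < length xs}"
  unfolding path_edges_def by (auto simp: image_iff) 

lemma is_path_iff: "is_path V E xs u v \<longleftrightarrow> gpath E xs \<and> hd xs = u \<and> last xs = v \<and> set xs \<subseteq> V"
  unfolding is_path_def gpath_def set_path_edges by auto

lemma gpath_append:
  assumes "gpath E xs" "gpath E ys" "set xs \<inter> set ys = {}" "{last xs, hd ys} \<in> E"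
  shows "gpath E (xs @ ys)"
  unfolding gpath_def
proof (intro conjI allI impI)
  show "xs @ ys \<noteq> []" using assms(1) by (simp add: gpath_def)
  show "distinct (xs @ ys)" using assms by (simp add: gpath_def)
  fix i assume i: "Suc i < length (xs @ ys)"
  consider "Suc i < length xs" | "Suc i = length xs" | "Suc i > length xs" by linarith
  then show "{(xs @ ys) ! i, (xs @ ys) ! Suc i} \<in> E"
  proof cases
    case 1 then show ?thesis using assms(1) by (simp add: gpath_def nth_append)
  next
    case 2
    have ii: "i = length xs - 1" using 2 by simp
    have ne: "xs \<noteq> []" "ys \<noteq> []" using assms(1,2) by (simp_all add: gpath_def)
    have a: "(xs @ ys) ! i = last xs" using ne unfolding ii by (simp add: last_conv_nth nth_append)
    have b: "(xs @ ys) ! Suc i = hd ys" using ne 2 by (simp add: hd_conv_nth nth_append)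
    show ?thesis unfolding a b by (rule assms(4))
  next
    case 3
    define k where "k = i - length xs"
    have k: "i = length xs + k" using 3 unfolding k_def by simp
    have "Suc k < length ys" using i k by simp
    then have "{ys!k, ys!Suc k} \<in> E" using assms(2) by (simp add: gpath_def)
    then show ?thesis using k by (simp add: nth_append)
  qed
qed

lemma gpath_take: "gpath E xs \<Longrightarrow> 0 < j \<Longrightarrow> gpath E (take j xs)"
  unfolding gpath_def by (auto simp: distinct_take)

lemma gpath_drop: "gpath E xs \<Longrightarrow> j < length xs \<Longrightarrow> gpath E (drop j xs)"
  unfolding gpath_def by (auto simp: distinct_drop)

lemma gpath_single: "gpath E [x]" by (simp add: gpath_def)

lemma gpath_shortcut:
  assumes "gpath E xs" "i < j" "j < length xs" "{xs!i, xs!j} \<in> E"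
  shows "gpath E (take (Suc i) xs @ drop j xs)"
proof (rule gpath_append)
  show "gpath E (take (Suc i) xs)" by (rule gpath_take[OF assms(1)]) simp
  show "gpath E (drop j xs)" by (rule gpath_drop[OF assms(1) assms(3)])
  have d: "distinct xs" using assms(1) by (simp add: gpath_def)
  show "set (take (Suc i) xs) \<inter> set (drop j xs) = {}"
    by (rule set_take_disj_set_drop_if_distinct[OF d]) (use assms(2) in linarith)
  have "take (Suc i) xs = take i xs @ [xs!i]" by (rule take_Suc_conv_app_nth) (use assms(2,3) in linarith)
  then have l: "last (take (Suc i) xs) = xs!i" by simp
  have h: "hd (drop j xs) = xs!j" by (rule hd_drop_conv_nth[OF assms(3)])
  show "{last (take (Suc i) xs), hd (drop j xs)} \<in> E" unfolding l h by (rule assms(4))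
qed




locale tri_setting =
  fixes V :: "'a set" and E :: "'a set set" and Ts :: "'a set set" and t :: nat and s :: "'a \<Rightarrow> 'a"
  assumes sg: "simple_graph V E" and conn: "connected_graph V E" and dt: "disjoint_triangles V E Ts t"
    and s_in: "\<And>T v. T \<in> Ts \<Longrightarrow> v \<in> T \<Longrightarrow> s v \<in> T"
    and s_ne: "\<And>T v. T \<in> Ts \<Longrightarrow> v \<in> T \<Longrightarrow> s v \<noteq> v"
    and s_ne2: "\<And>T v. T \<in> Ts \<Longrightarrow> v \<in> T \<Longrightarrow> s (s v) \<noteq> v"
begin

lemma finV: "finite V" using sg by (simp add: simple_graph_def)
lemma edge_sub: "g \<in> E \<Longrightarrow> g \<subseteq> V" using sg by (simp add: simple_graph_def)
lemma edge_card: "g \<in> E \<Longrightarrow> card g = 2" using sg by (simp add: simple_graph_def)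
lemma finE: "finite E"
proof -
  have "E \<subseteq> Pow V" using edge_sub by auto
  then show ?thesis using finV by (meson finite_Pow_iff finite_subset)
qed
lemma edge_ex: assumes "g \<in> E" obtains a b where "g = {a,b}" "a \<noteq> b"
  using edge_card[OF assms] by (meson card_2_iff)

lemma edges_inter:
  assumes "g \<in> E" "h \<in> E" "g \<noteq> h" "v \<in> g" "v \<in> h" "w \<in> g" "w \<in> h"
  shows "v = w"
proof (rule ccontr)
  assume "v \<noteq> w"
  then have c: "card {v,w} = 2" by simp
  have fg: "finite g" "finite h" using assms(1,2) edge_card by (metis card.infinite zero_neq_numeral)+
  have "{v,w} = g" using card_seteq[OF fg(1), of "{v,w}"] assms edge_card c by auto
  moreover have "{v,w} = h" using card_seteq[OF fg(2), of "{v,w}"] assms edge_card c by auto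
  ultimately show False using assms(3) by simp
qed

lemma Ts_props: assumes "T \<in> Ts" shows "T \<subseteq> V" "card T = 3" "\<And>x y. x \<in> T \<Longrightarrow> y \<in> T \<Longrightarrow> x \<noteq> y \<Longrightarrow> {x,y} \<in> E"
  using dt assms by (auto simp: disjoint_triangles_def triangle_def)

lemma Ts_disj: "T \<in> Ts \<Longrightarrow> T' \<in> Ts \<Longrightarrow> v \<in> T \<Longrightarrow> v \<in> T' \<Longrightarrow> T = T'"
  using dt unfolding disjoint_triangles_def by blast

lemma T_eq: assumes "T \<in> Ts" "v \<in> T" shows "T = {v, s v, s (s v)}"
proof -
  have sub: "{v, s v, s (s v)} \<subseteq> T" using assms s_in by blast
  have d: "s (s v) \<noteq> s v" using s_ne[OF assms(1) s_in[OF assms]] .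
  have "card {v, s v, s (s v)} = 3" using s_ne[OF assms] s_ne2[OF assms] d by simp
  moreover have "finite T" using Ts_props(2)[OF assms(1)] by (metis card.infinite zero_neq_numeral)
  ultimately show ?thesis using card_seteq sub Ts_props(2)[OF assms(1)] by (metis le_refl)
qed

lemma s3: assumes "T \<in> Ts" "v \<in> T" shows "s (s (s v)) = v"
proof -
  have a: "s v \<in> T" "s (s v) \<in> T" using s_in assms by blast+
  have "s (s (s v)) \<in> T" using s_in[OF assms(1) a(2)] .
  moreover have "s (s (s v)) \<noteq> s (s v)" using s_ne[OF assms(1) a(2)] .
  moreover have "s (s (s v)) \<noteq> s v" using s_ne2[OF assms(1) a(1)] .
  ultimately show ?thesis using T_eq[OF assms] by blast
qed

lemma s2ne: "T \<in> Ts \<Longrightarrow> v \<in> T \<Longrightarrow> s (s v) \<noteq> s v"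
  using s_ne s_in by blast

lemma T_cases: "T \<in> Ts \<Longrightarrow> v \<in> T \<Longrightarrow> w \<in> T \<Longrightarrow> w \<noteq> v \<Longrightarrow> w = s v \<or> w = s (s v)"
  using T_eq by blast

definition Tof :: "'a \<Rightarrow> 'a set" where "Tof v = (THE T. T \<in> Ts \<and> v \<in> T)"
lemma Tof_eq: "T \<in> Ts \<Longrightarrow> v \<in> T \<Longrightarrow> Tof v = T"
  unfolding Tof_def by (rule the_equality) (use Ts_disj in blast)+

definition TV where "TV = \<Union>Ts"

definition sv :: "'a set set \<Rightarrow> 'a" where "sv \<epsilon> = (THE v. \<forall>x\<in>\<epsilon>. v \<in> x)"
lemma sv_eq: "g \<in> E \<Longrightarrow> h \<in> E \<Longrightarrow> g \<noteq> h \<Longrightarrow> v \<in> g \<Longrightarrow> v \<in> h \<Longrightarrow> sv {g,h} = v"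
  unfolding sv_def by (rule the_equality) (auto dest: edges_inter)

definition col :: "'a set set \<Rightarrow> 'a + ('a set \<times> bool)" where
  "col \<epsilon> = (let v = sv \<epsilon> in if v \<in> TV then Inr (Tof v, {v, s (s v)} \<in> \<epsilon> \<and> {v, s v} \<notin> \<epsilon>) else Inl v)"

end



context tri_setting begin

definition P :: "'a set \<Rightarrow> 'a set \<Rightarrow> 'a list \<Rightarrow> bool" where
  "P e f xs \<longleftrightarrow> gpath E xs \<and> hd xs \<in> e \<and> last xs \<in> f"

definition minP :: "'a set \<Rightarrow> 'a set \<Rightarrow> 'a list \<Rightarrow> bool" where
  "minP e f xs \<longleftrightarrow> P e f xs \<and> (\<forall>ys. P e f ys \<longrightarrow> length xs \<le> length ys)"

lemma conn_path: assumes "a \<in> V" "b \<in> V" obtains xs where "gpath E xs" "hd xs = a" "last xs = b"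
  using conn assms unfolding connected_graph_def is_path_iff by blast

lemma minP_ex: assumes "e \<in> E" "f \<in> E" shows "\<exists>xs. minP e f xs"
proof -
  obtain a b where ab: "e = {a,b}" using edge_ex[OF assms(1)] by metis
  obtain c d where cd: "f = {c,d}" using edge_ex[OF assms(2)] by metis
  have "a \<in> V" "c \<in> V" using ab cd edge_sub assms by auto
  then obtain xs where "gpath E xs" "hd xs = a" "last xs = c" using conn_path by metis
  then have "P e f xs" using ab cd by (simp add: P_def)
  then obtain ys where "P e f ys \<and> (\<forall>zs. P e f zs \<longrightarrow> length ys \<le> length zs)"
    using ex_has_least_nat[of "P e f" xs length] by blast
  then show ?thesis unfolding minP_def by blast
qed

context
  fixes e f xs
  assumes eE: "e \<in> E" and fE: "f \<in> E" and disj: "e \<inter> f = {}" and mp: "minP e f xs"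
begin

lemma gp: "gpath E xs" and hdx: "hd xs \<in> e" and lastx: "last xs \<in> f"
  using mp by (auto simp: minP_def P_def)

lemma minle: "P e f ys \<Longrightarrow> length xs \<le> length ys"
  using mp by (auto simp: minP_def)

lemma dxs: "distinct xs" using gp by (simp add: gpath_def)
lemma nexs: "xs \<noteq> []" using gp by (simp add: gpath_def)

lemma x0: "xs ! 0 \<in> e" using hdx nexs by (simp add: hd_conv_nth)
lemma xl: "xs ! (length xs - 1) \<in> f" using lastx nexs by (simp add: last_conv_nth)

lemma len2: "2 \<le> length xs"
proof (rule ccontr)
  assume "\<not> 2 \<le> length xs"
  moreover have "length xs > 0" using nexs by simp
  ultimately have "length xs = 1" by linarith
  then show False using x0 xl disj by auto
qed

lemma M1: assumes "i < j" "j < length xs" "{xs!i, xs!j} \<in> E" shows "j = Suc i"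
proof -
  let ?ys = "take (Suc i) xs @ drop j xs"
  have g: "gpath E ?ys" using gpath_shortcut[OF gp assms] .
  have "hd ?ys = hd xs" using nexs by (cases xs) auto
  moreover have "last ?ys = last xs" using assms by simp
  ultimately have "P e f ?ys" using g hdx lastx by (simp add: P_def)
  then have "length xs \<le> length ?ys" by (rule minle)
  then show ?thesis using assms by simp
qed

lemma M2: assumes "0 < j" "j < length xs" "xs ! j \<in> e" shows False
proof -
  let ?ys = "drop j xs"
  have g: "gpath E ?ys" using gpath_drop[OF gp assms(2)] .
  have "hd ?ys = xs!j" using assms by (simp add: hd_drop_conv_nth)
  moreover have "last ?ys = last xs" using assms by simp
  ultimately have "P e f ?ys" using g assms lastx by (simp add: P_def)
  then have "length xs \<le> length ?ys" by (rule minle)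
  then show ?thesis using assms by simp
qed

lemma M3: assumes "Suc j < length xs" "xs ! j \<in> f" shows False
proof -
  let ?ys = "take (Suc j) xs"
  have g: "gpath E ?ys" using gpath_take[OF gp] by simp
  have "take (Suc j) xs = take j xs @ [xs!j]" by (rule take_Suc_conv_app_nth) (use assms in linarith)
  then have "last ?ys = xs!j" by simp
  moreover have "hd ?ys = hd xs" using assms by simp
  ultimately have "P e f ?ys" using g assms hdx by (simp add: P_def)
  then have "length xs \<le> length ?ys" by (rule minle)
  then show ?thesis using assms by simp
qed

end
end



context tri_setting begin

definition badS :: "'a set \<Rightarrow> 'a list \<Rightarrow> bool" where
  "badS e xs \<longleftrightarrow> (\<exists>T\<in>Ts. xs!0 \<in> T \<and> xs!1 \<in> T \<and> e = {xs!0, s (xs!0)} \<and> xs!0 = s (xs!1))"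

definition badE :: "'a set \<Rightarrow> 'a list \<Rightarrow> bool" where
  "badE f xs \<longleftrightarrow> (\<exists>T\<in>Ts. xs!(length xs - 1) \<in> T \<and> xs!(length xs - 2) \<in> T
      \<and> f = {xs!(length xs - 1), s (xs!(length xs - 1))} \<and> xs!(length xs - 1) = s (xs!(length xs - 2)))"

lemma both_in_T:
  assumes "T \<in> Ts" "v \<in> T" "w \<in> T" "e = {v, s v}" "f = {w, s w}" shows "e \<inter> f \<noteq> {}"
proof -
  have "w = v \<or> w = s v \<or> w = s (s v)" using T_eq assms by blast
  moreover have "s (s (s v)) = v" using s3 assms by blast
  ultimately show ?thesis using assms by auto
qed

context
  fixes e f xs
  assumes eE: "e \<in> E" and fE: "f \<in> E" and disj: "e \<inter> f = {}" and mp: "minP e f xs"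
begin

lemma fixS: "\<exists>xs'. minP e f xs' \<and> \<not> badS e xs'"
proof (cases "badS e xs")
  case False then show ?thesis using mp by blast
next
  case True
  then obtain T where T: "T \<in> Ts" "xs!0 \<in> T" "xs!1 \<in> T" "e = {xs!0, s (xs!0)}" "xs!0 = s (xs!1)"
    unfolding badS_def by blast
  define v where "v = xs!0"
  define w where "w = xs!1"
  define u where "u = s v"
  have n2: "2 \<le> length xs" using len2[OF eE fE disj mp] .
  have uT: "u \<in> T" using T s_in unfolding u_def v_def by blast
  have uw: "u \<noteq> w" using s_ne2[OF T(1) T(3)] T(5) unfolding u_def v_def w_def by simp
  have uv: "u \<noteq> v" using s_ne T unfolding u_def v_def by blast
  have ue: "u \<in> e" using T(4) unfolding u_def v_def by simp
  let ?xs = "u # tl xs"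
  have tl_eq: "tl xs = drop 1 xs" by (simp add: drop_Suc)
  have gtl: "gpath E (tl xs)" unfolding tl_eq by (rule gpath_drop[OF gp[OF eE fE disj mp]]) (use n2 in simp)
  have hdtl: "hd (tl xs) = w" unfolding tl_eq w_def using n2 by (simp add: hd_drop_conv_nth)
  have unot: "u \<notin> set (tl xs)"
  proof
    assume "u \<in> set (tl xs)"
    then obtain j where j: "j < length (tl xs)" "tl xs ! j = u" by (metis in_set_conv_nth)
    have "xs ! Suc j = u" using j n2 by (cases xs) auto
    moreover have "Suc j < length xs" using j by simp
    ultimately show False using M2[OF eE fE disj mp, of "Suc j"] ue by simp
  qed
  have g: "gpath E ?xs"
    using gpath_append[OF gpath_single[of E u] gtl] unot hdtl Ts_props(3)[OF T(1) uT T(3)[folded w_def] uw] by simp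
  have "last ?xs = last xs" using n2 by (cases xs) auto
  then have PP: "P e f ?xs" using g ue lastx[OF eE fE disj mp] by (simp add: P_def)
  have len: "length ?xs = length xs" using n2 by simp
  have m: "minP e f ?xs" unfolding minP_def
  proof (intro conjI allI impI)
    show "P e f ?xs" by (rule PP)
    fix ys assume "P e f ys"
    then show "length ?xs \<le> length ys" using mp len unfolding minP_def by simp
  qed
  have "\<not> badS e ?xs"
  proof
    assume "badS e ?xs"
    have a1: "?xs ! 1 = w" using n2 unfolding w_def by (cases xs) auto
    have "u = s w" using \<open>badS e ?xs\<close> a1 unfolding badS_def by auto
    then show False using T(5) uv unfolding v_def w_def by simp
  qed
  then show ?thesis using m by blast
qed

end

context
  fixes e f xs
  assumes eE: "e \<in> E" and fE: "f \<in> E" and disj: "e \<inter> f = {}" and mp: "minP e f xs" and gs: "\<not> badS e xs"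
begin

lemma fixE: "\<exists>xs'. minP e f xs' \<and> \<not> badS e xs' \<and> \<not> badE f xs'"
proof (cases "badE f xs")
  case False then show ?thesis using mp gs by blast
next
  case True
  define n where "n = length xs"
  then obtain T where T: "T \<in> Ts" "xs!(n-1) \<in> T" "xs!(n-2) \<in> T" "f = {xs!(n-1), s (xs!(n-1))}"
    "xs!(n-1) = s (xs!(n-2))"
    using True unfolding badE_def by blast
  define v where "v = xs!(n-2)"
  define w where "w = xs!(n-1)"
  define z where "z = s w"
  have n2: "2 \<le> n" using len2[OF eE fE disj mp] n_def by simp
  have zT: "z \<in> T" using T s_in unfolding z_def w_def by blast
  have zv: "z \<noteq> v" using s_ne2[OF T(1) T(3)] T(5) unfolding z_def v_def w_def by simp
  have zw: "z \<noteq> w" using s_ne T unfolding z_def w_def by blast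
  have zf: "z \<in> f" using T(4) unfolding z_def w_def by simp
  let ?b = "take (n-1) xs"
  let ?xs = "?b @ [z]"
  have gb: "gpath E ?b" by (rule gpath_take[OF gp[OF eE fE disj mp]]) (use n2 in simp)
  have tk: "take (Suc (n-2)) xs = take (n-2) xs @ [xs!(n-2)]"
    by (rule take_Suc_conv_app_nth) (use n2 n_def in simp)
  have lb: "last ?b = v" using tk n2 unfolding v_def by (simp add: Suc_diff_Suc numeral_2_eq_2)
  have znot: "z \<notin> set ?b"
  proof
    assume "z \<in> set ?b"
    then obtain j where j: "j < length ?b" "?b ! j = z" by (metis in_set_conv_nth)
    have "xs ! j = z" "Suc j < length xs" using j n_def n2 by auto
    then show False using M3[OF eE fE disj mp, of j] zf by simp
  qed
  have vne: "v \<noteq> z" using zv by simp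
  have g: "gpath E ?xs"
    using gpath_append[OF gb gpath_single[of E z]] znot lb Ts_props(3)[OF T(1) _ zT vne] T(3)
    unfolding v_def by simp
  have bne: "?b \<noteq> []" using n2 n_def nexs[OF eE fE disj mp] by simp
  have hb: "hd ?xs = hd xs" using n2 hd_append2[OF bne] hd_take[of "n-1" xs] by simp
  then have PP: "P e f ?xs" using g zf hdx[OF eE fE disj mp] by (simp add: P_def)
  have len: "length ?xs = length xs" using n2 n_def by simp
  have m: "minP e f ?xs" unfolding minP_def
  proof (intro conjI allI impI)
    show "P e f ?xs" by (rule PP)
    fix ys assume "P e f ys"
    then show "length ?xs \<le> length ys" using mp len unfolding minP_def by (simp only:)
  qed
  have nth_lt: "\<And>i. i < n - 1 \<Longrightarrow> ?xs ! i = xs ! i" using n_def by (simp add: nth_append)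
  have nth_last: "?xs ! (n-1) = z" using n_def n2 by (simp add: nth_append)
  have nb: "\<not> badE f ?xs"
  proof
    assume "badE f ?xs"
    have a: "?xs ! (length ?xs - 1) = z" using nth_last len n_def by simp
    have b: "?xs ! (length ?xs - 2) = v" using nth_lt[of "n-2"] n2 len n_def unfolding v_def by simp
    have "z = s v" using \<open>badE f ?xs\<close> unfolding badE_def a b by blast
    then show False using zv T(5) s3[OF T(1) T(3)] unfolding z_def w_def v_def by simp
  qed
  have ns: "\<not> badS e ?xs"
  proof (cases "n = 2")
    case False
    then have "?xs ! 0 = xs ! 0" "?xs ! 1 = xs ! 1" using n2 nth_lt by auto
    then show ?thesis using gs unfolding badS_def by simp
  next
    case True
    show ?thesis
    proof
      assume "badS e ?xs"
      then obtain T' where T': "T' \<in> Ts" "?xs!0 \<in> T'" "e = {?xs!0, s (?xs!0)}" unfolding badS_def by blast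
      have "?xs ! 0 = v" using True nth_lt[of 0] unfolding v_def by simp
      then have "T' = T" using Ts_disj T' T(1,3) unfolding v_def by metis
      then have "e \<inter> f \<noteq> {}" using both_in_T[OF T(1) _ T(2)] T' T(4) \<open>?xs ! 0 = v\<close> T(3) unfolding v_def by metis
      then show False using disj by simp
    qed
  qed
  show ?thesis using m nb ns by blast
qed

end

lemma good_ex: assumes "e \<in> E" "f \<in> E" "e \<inter> f = {}"
  shows "\<exists>xs. minP e f xs \<and> \<not> badS e xs \<and> \<not> badE f xs"
proof -
  obtain xs where "minP e f xs" using minP_ex assms by blast
  then obtain xs' where "minP e f xs'" "\<not> badS e xs'" using fixS assms by blast
  then show ?thesis using fixE assms by blast
qed

end



context tri_setting begin

context
  fixes e f xs
  assumes eE: "e \<in> E" and fE: "f \<in> E" and disj: "e \<inter> f = {}" and mp: "minP e f xs"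
    and gs: "\<not> badS e xs" and ge: "\<not> badE f xs"
begin

abbreviation "n \<equiv> length xs"

definition Y :: "nat \<Rightarrow> 'a set" where
  "Y i = (if i = 0 then e else if i = n then f else {xs!(i-1), xs!i})"

lemmas M1' = M1[OF eE fE disj mp] and M2' = M2[OF eE fE disj mp] and M3' = M3[OF eE fE disj mp]
lemmas gp' = gp[OF eE fE disj mp] and n2 = len2[OF eE fE disj mp] and dxs' = dxs[OF eE fE disj mp]
lemmas x0' = x0[OF eE fE disj mp] and xl' = xl[OF eE fE disj mp]

lemma nne: "xs \<noteq> []" using n2 by auto
lemma Y0: "Y 0 = e" unfolding Y_def by simp
lemma Yn: "Y n = f" unfolding Y_def using nne by simp
lemma Y_mid: "0 < i \<Longrightarrow> i < n \<Longrightarrow> Y i = {xs!(i-1), xs!i}"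
  unfolding Y_def by simp

lemma Y_E: "i \<le> n \<Longrightarrow> Y i \<in> E"
proof -
  assume i: "i \<le> n"
  consider "i = 0" | "i = n" | "0 < i" "i < n" using i by linarith
  then show "Y i \<in> E"
  proof cases
    case 1 then show ?thesis using eE Y0 by simp
  next
    case 2 then show ?thesis using fE Yn by simp
  next
    case 3
    have "Suc (i - 1) < n" using 3 by simp
    then have "{xs!(i-1), xs!Suc (i-1)} \<in> E" using gp' unfolding gpath_def by blast
    then show ?thesis using 3 Y_mid by simp
  qed
qed

lemma xY: assumes "j < n" shows "xs!j \<in> Y j" "xs!j \<in> Y (Suc j)"
proof -
  show "xs!j \<in> Y j"
  proof (cases "j = 0")
    case True then show ?thesis using x0' Y0 by simp
  next
    case False then show ?thesis using assms Y_mid by simp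
  qed
  show "xs!j \<in> Y (Suc j)"
  proof (cases "Suc j = n")
    case True then have "j = n - 1" by simp
    then show ?thesis using xl' Yn True by simp
  next
    case False then show ?thesis using assms Y_mid[of "Suc j"] by simp
  qed
qed

lemma Y_inj: "inj_on Y {0..n}"
proof (rule inj_onI)
  have key: "\<And>i i'. i < i' \<Longrightarrow> i' \<le> n \<Longrightarrow> Y i = Y i' \<Longrightarrow> False"
  proof -
    fix i i' assume ii: "i < i'" "i' \<le> n" "Y i = Y i'"
    show False
    proof (cases "i = 0")
      case True
      show False
      proof (cases "i' = n")
        case True
        then have "e = f" using ii \<open>i = 0\<close> Y0 Yn by simp
        then show False using disj x0' by auto
      next
        case False
        then have "Y i' = {xs!(i'-1), xs!i'}" using ii True Y_mid by simp
        then have "xs!i' \<in> e" using ii \<open>i = 0\<close> Y0 by simp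
        then show False using M2'[of i'] ii False by simp
      qed
    next
      case False
      then have Yi: "Y i = {xs!(i-1), xs!i}" using ii Y_mid by simp
      show False
      proof (cases "i' = n")
        case True
        then have "xs!(i-1) \<in> f" using ii Yi Yn by blast
        then show False using M3'[of "i-1"] ii False True by simp
      next
        case False
        then have Yi': "Y i' = {xs!(i'-1), xs!i'}" using ii Y_mid by simp
        have d: "\<And>a b. a < n \<Longrightarrow> b < n \<Longrightarrow> xs!a = xs!b \<Longrightarrow> a = b"
          using dxs' nth_eq_iff_index_eq by blast
        have "xs!i \<in> Y i'" using Yi ii by simp
        then have "xs!i = xs!(i'-1) \<or> xs!i = xs!i'" using Yi' by simp
        moreover have bi: "i - 1 < n" "i' - 1 < n" "i' < n" "i < n" using ii False by auto
        ultimately have "i = i' - 1 \<or> i = i'"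
          using d[of i "i'-1"] d[of i i'] by (elim disjE) simp_all
        then have r1: "i = i' - 1" using ii by simp
        have "xs!(i-1) \<in> Y i'" using Yi ii by simp
        then have r2: "xs!(i-1) = xs!(i'-1) \<or> xs!(i-1) = xs!i'" using Yi' by simp
        have "i-1 = i'-1 \<or> i-1 = i'" using d[of "i-1" "i'-1"] d[of "i-1" i'] bi r2 by (elim disjE) simp_all
        then show False using \<open>i \<noteq> 0\<close> r1 by arith
      qed
    qed
  qed
  fix i i' assume "i \<in> {0..n}" "i' \<in> {0..n}" "Y i = Y i'"
  then have "i \<le> n" "i' \<le> n" by auto
  show "i = i'"
  proof (rule ccontr)
    assume "i \<noteq> i'"
    then consider "i < i'" | "i' < i" by linarith
    then show False using key \<open>i \<le> n\<close> \<open>i' \<le> n\<close> \<open>Y i = Y i'\<close> by cases (metis, metis)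
  qed
qed

lemma Y_ne: assumes "j < n" shows "Y j \<noteq> Y (Suc j)"
proof
  assume a: "Y j = Y (Suc j)"
  have "j \<in> {0..n}" "Suc j \<in> {0..n}" using \<open>j < n\<close> by auto
  then have "j = Suc j" using inj_onD[OF Y_inj a] by blast
  then show False by simp
qed

lemma sv_Y: assumes "j < n" shows "sv {Y j, Y (Suc j)} = xs!j"
  by (rule sv_eq[OF Y_E Y_E Y_ne[OF assms] xY(1)[OF assms] xY(2)[OF assms]]) (use assms in simp_all)


definition B :: "nat \<Rightarrow> bool" where
  "B j \<longleftrightarrow> {xs!j, s (s (xs!j))} \<in> {Y j, Y (Suc j)} \<and> {xs!j, s (xs!j)} \<notin> {Y j, Y (Suc j)}"

lemma col_Y: assumes "j < n"
  shows "col {Y j, Y (Suc j)} = (if xs!j \<in> TV then Inr (Tof (xs!j), B j) else Inl (xs!j))"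
  unfolding col_def Let_def sv_Y[OF assms] B_def by simp

lemma dd: "a < n \<Longrightarrow> b < n \<Longrightarrow> xs!a = xs!b \<Longrightarrow> a = b"
  using dxs' nth_eq_iff_index_eq by blast

lemma B_diff:
  assumes j: "Suc j < n" and T: "T \<in> Ts" "xs!j \<in> T" "xs!(Suc j) \<in> T"
  shows "B j \<noteq> B (Suc j)"
proof -
  define v where "v = xs!j"
  define w where "w = xs!(Suc j)"
  have vT: "v \<in> T" and wT: "w \<in> T" using T unfolding v_def w_def by auto
  have vw: "v \<noteq> w" using dd[of j "Suc j"] j unfolding v_def w_def by auto
  have Y1: "Y (Suc j) = {v, w}" using Y_mid[of "Suc j"] j unfolding v_def w_def by simp
  have s3v: "s (s (s v)) = v" using s3[OF T(1) vT] .
  have s3w: "s (s (s w)) = w" using s3[OF T(1) wT] .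
  have sv1: "s v \<noteq> v" "s (s v) \<noteq> v" "s (s v) \<noteq> s v" using s_ne[OF T(1) vT] s_ne2[OF T(1) vT] s2ne[OF T(1) vT] by auto
  have sw1: "s w \<noteq> w" "s (s w) \<noteq> w" "s (s w) \<noteq> s w" using s_ne[OF T(1) wT] s_ne2[OF T(1) wT] s2ne[OF T(1) wT] by auto
  have svT: "s v \<in> T" "s (s v) \<in> T" "s w \<in> T" using s_in T(1) vT wT by blast+
  consider "w = s v" | "w = s (s v)" using T_cases[OF T(1) vT wT] vw by auto
  then show ?thesis
  proof cases
    case 1
    have swv: "s w = s (s v)" using 1 by simp
    have Bj: "\<not> B j" unfolding B_def v_def[symmetric] using Y1 1 by auto
    have ssw: "s (s w) = v" using 1 s3v by simp
    have nY1: "{w, s w} \<noteq> Y (Suc j)" using Y1 swv sv1 sw1 by auto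
    have nY2: "{w, s w} \<noteq> Y (Suc (Suc j))"
    proof (cases "Suc (Suc j) = n")
      case True
      then have "Y (Suc (Suc j)) = f" using Yn by simp
      moreover have "\<not> (f = {w, s w})"
      proof
        assume fw: "f = {w, s w}"
        have "n - 1 = Suc j" "n - 2 = j" using True by simp_all
        then have "xs!(n-1) = w" "xs!(n-2) = v" unfolding v_def w_def by simp_all
        then have "badE f xs" unfolding badE_def using T(1) vT wT fw 1 by blast
        then show False using ge by simp
      qed
      ultimately show ?thesis by auto
    next
      case False
      then have Y2: "Y (Suc (Suc j)) = {w, xs!(Suc (Suc j))}" using Y_mid[of "Suc (Suc j)"] j unfolding w_def by simp
      show ?thesis
      proof
        assume "{w, s w} = Y (Suc (Suc j))"
        then have x2: "xs!(Suc (Suc j)) = s w"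
          using Y2 dd[of "Suc j" "Suc (Suc j)"] j False sw1 unfolding w_def by (auto simp: doubleton_eq_iff)
        have "v \<noteq> s w" using swv sv1 by simp
        then have "{xs!j, xs!(Suc (Suc j))} \<in> E" using Ts_props(3)[OF T(1) vT svT(3)] x2 unfolding v_def by simp
        then have "Suc (Suc j) = Suc j" using M1'[of j "Suc (Suc j)"] j False by simp
        then show False by simp
      qed
    qed
    have "B (Suc j)" unfolding B_def w_def[symmetric] using Y1 ssw nY1 nY2 by auto
    then show ?thesis using Bj by simp
  next
    case 2
    have swv: "s w = v" using 2 s3v by simp
    have Bsj: "\<not> B (Suc j)" unfolding B_def w_def[symmetric] using Y1 swv by auto
    have nY1: "{v, s v} \<noteq> Y (Suc j)" using Y1 2 sv1 by (auto simp: doubleton_eq_iff)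
    have nY0: "{v, s v} \<noteq> Y j"
    proof (cases "j = 0")
      case True
      then have "Y j = e" using Y0 by simp
      moreover have "\<not> (e = {v, s v})"
      proof
        assume ev: "e = {v, s v}"
        have "xs!0 = v" "xs!1 = w" using True unfolding v_def w_def by auto
        then have "badS e xs" unfolding badS_def using T(1) vT wT ev swv by auto
        then show False using gs by simp
      qed
      ultimately show ?thesis by auto
    next
      case False
      then have Y2: "Y j = {xs!(j-1), v}" using Y_mid[of j] j unfolding v_def by simp
      show ?thesis
      proof
        assume "{v, s v} = Y j"
        then have x2: "xs!(j-1) = s v"
          using Y2 dd[of "j-1" j] j False sv1 unfolding v_def by (auto simp: doubleton_eq_iff)
        have "s v \<noteq> w" using 2 sv1 by simp
        then have "{xs!(j-1), xs!(Suc j)} \<in> E" using Ts_props(3)[OF T(1) svT(1) wT] x2 unfolding w_def by simp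
        moreover have "j - 1 < Suc j" by simp
        ultimately have "Suc j = Suc (j-1)" using M1'[of "j-1" "Suc j"] j by blast
        then show False using False by simp
      qed
    qed
    have "B j" unfolding B_def v_def[symmetric] using Y1 2 nY0 nY1 by auto
    then show ?thesis using Bsj by simp
  qed
qed

lemma col_inj: "inj_on (\<lambda>j. col {Y j, Y (Suc j)}) {0..<n}"
proof -
  have key: "\<And>j j'. j < j' \<Longrightarrow> j' < n \<Longrightarrow> col {Y j, Y (Suc j)} = col {Y j', Y (Suc j')} \<Longrightarrow> False"
  proof -
    fix j j' assume jj: "j < j'" "j' < n" and c: "col {Y j, Y (Suc j)} = col {Y j', Y (Suc j')}"
    have cj: "col {Y j, Y (Suc j)} = (if xs!j \<in> TV then Inr (Tof (xs!j), B j) else Inl (xs!j))"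
      using col_Y jj by simp
    have cj': "col {Y j', Y (Suc j')} = (if xs!j' \<in> TV then Inr (Tof (xs!j'), B j') else Inl (xs!j'))"
      using col_Y jj by simp
    have neq: "xs!j \<noteq> xs!j'" using dd[of j j'] jj by auto
    show False
    proof (cases "xs!j \<in> TV")
      case False
      then show False using c cj cj' neq by (auto split: if_splits)
    next
      case True
      then obtain T where T: "T \<in> Ts" "xs!j \<in> T" unfolding TV_def by blast
      have tj: "Tof (xs!j) = T" using Tof_eq T by blast
      have inTV: "xs!j' \<in> TV" and eqs: "Tof (xs!j') = T" "B j = B j'"
        using c cj cj' True tj by (auto split: if_splits)
      then obtain T' where T': "T' \<in> Ts" "xs!j' \<in> T'" unfolding TV_def by blast
      have "T' = T" using Tof_eq[OF T'] eqs by simp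
      then have "{xs!j, xs!j'} \<in> E" using Ts_props(3)[OF T(1) T(2)] T' neq by simp
      then have "j' = Suc j" using M1'[of j j'] jj by simp
      then show False using B_diff[of j T] jj T T' \<open>T' = T\<close> eqs by simp
    qed
  qed
  show ?thesis
  proof (rule inj_onI)
    fix j j' assume "j \<in> {0..<n}" "j' \<in> {0..<n}" and c: "col {Y j, Y (Suc j)} = col {Y j', Y (Suc j')}"
    then have "j < n" "j' < n" by auto
    show "j = j'"
    proof (rule ccontr)
      assume "j \<noteq> j'"
      then consider "j < j'" | "j' < j" by linarith
      then show False
      proof cases
        case 1 show False by (rule key[OF 1 \<open>j' < n\<close> c])
      next
        case 2 show False by (rule key[OF 2 \<open>j < n\<close> c[symmetric]])
      qed
    qed
  qed
qed


lemma Lpath: "\<exists>ys. is_path E (line_graph_edges E) ys e f \<and> distinct (map col (path_edges ys))"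
proof -
  define ys where "ys = map Y [0..<Suc n]"
  have len: "length ys = Suc n" unfolding ys_def by simp
  have ysi: "\<And>i. i < Suc n \<Longrightarrow> ys ! i = Y i" unfolding ys_def by (simp del: upt_Suc)
  have pe: "path_edges ys = map (\<lambda>i. {Y i, Y (Suc i)}) [0..<n]"
    unfolding path_edges_def len by (rule map_cong) (auto simp: ysi)
  have LE: "\<And>i. i < n \<Longrightarrow> {Y i, Y (Suc i)} \<in> line_graph_edges E"
  proof -
    fix i assume i: "i < n"
    have "Y i \<in> E" "Y (Suc i) \<in> E" using Y_E i by auto
    moreover have "Y i \<noteq> Y (Suc i)" using Y_ne i by simp
    moreover have "xs!i \<in> Y i \<inter> Y (Suc i)" using xY i by simp
    ultimately show "{Y i, Y (Suc i)} \<in> line_graph_edges E" unfolding line_graph_edges_def by blast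
  qed
  have dys: "distinct ys" unfolding ys_def distinct_map
  proof
    have "set [0..<Suc n] = {0..n}" by auto
    then show "inj_on Y (set [0..<Suc n])" using Y_inj by (simp only:)
  qed simp
  have g: "gpath (line_graph_edges E) ys" unfolding gpath_def
  proof (intro conjI allI impI)
    show "ys \<noteq> []" using len by auto
    show "distinct ys" by (rule dys)
    fix i assume "Suc i < length ys"
    then have i: "i < n" using len by simp
    then show "{ys ! i, ys ! Suc i} \<in> line_graph_edges E" using LE ysi by simp
  qed
  have yne: "ys \<noteq> []" using len by auto
  have h: "hd ys = e" using ysi[of 0] Y0 hd_conv_nth[OF yne] by simp
  have l: "last ys = f" using ysi[of n] len Yn last_conv_nth[OF yne] by simp
  have st: "set ys \<subseteq> E" using ysi len Y_E by (auto simp: in_set_conv_nth)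
  have ip: "is_path E (line_graph_edges E) ys e f" unfolding is_path_iff using g h l st by simp
  have "distinct (map col (path_edges ys))" unfolding pe map_map distinct_map
  proof
    show "inj_on (col \<circ> (\<lambda>i. {Y i, Y (Suc i)})) (set [0..<n])" using col_inj by (simp add: comp_def)
  qed simp
  then show ?thesis using ip by blast
qed

end
end



context tri_setting begin

lemma Lpath_all: assumes "e \<in> E" "f \<in> E"
  shows "\<exists>ys. is_path E (line_graph_edges E) ys e f \<and> distinct (map col (path_edges ys))"
proof (cases "e = f")
  case True
  have "is_path E (line_graph_edges E) [e] e f" using assms True unfolding is_path_iff gpath_def by simp
  moreover have "path_edges [e] = []" by (simp add: path_edges_def)
  ultimately show ?thesis by (metis distinct.simps(1) list.map(1))
next
  case False
  show ?thesis
  proof (cases "e \<inter> f = {}")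
    case True
    then obtain xs where "minP e f xs" "\<not> badS e xs" "\<not> badE f xs" using good_ex assms by blast
    then show ?thesis using Lpath[OF assms True] by blast
  next
    case nd: False
    have "{e, f} \<in> line_graph_edges E" using assms False nd unfolding line_graph_edges_def by blast
    then have "is_path E (line_graph_edges E) [e, f] e f" using assms False unfolding is_path_iff gpath_def
      by (auto simp: nth_Cons')
    moreover have "path_edges [e, f] = [{e, f}]" by (simp add: path_edges_def)
    ultimately show ?thesis by (metis distinct_singleton list.map(1) list.map(2))
  qed
qed

definition D where "D = {v \<in> V. 2 \<le> degree E v}"
definition C where "C = (D - TV) <+> (Ts \<times> (UNIV :: bool set))"

lemma finTs: "finite Ts"
proof -
  have "Ts \<subseteq> Pow V" using Ts_props(1) by auto
  then show ?thesis using finV by (meson finite_Pow_iff finite_subset)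
qed

lemma finD: "finite D" unfolding D_def using finV by simp

lemma deg2: assumes "g \<in> E" "h \<in> E" "g \<noteq> h" "v \<in> g" "v \<in> h" shows "v \<in> D"
proof -
  have "{g, h} \<subseteq> {x \<in> E. v \<in> x}" using assms by auto
  then have "card {g, h} \<le> degree E v" unfolding degree_def using finE by (simp add: card_mono)
  then show ?thesis unfolding D_def using assms edge_sub by auto
qed

lemma TV_D: "TV \<subseteq> D"
proof
  fix v assume "v \<in> TV"
  then obtain T where T: "T \<in> Ts" "v \<in> T" unfolding TV_def by blast
  have a: "s v \<in> T" "s (s v) \<in> T" using s_in T by blast+
  have "{v, s v} \<in> E" using Ts_props(3)[OF T(1) T(2) a(1)] s_ne[OF T] by auto
  moreover have "{v, s (s v)} \<in> E" using Ts_props(3)[OF T(1) T(2) a(2)] s_ne2[OF T] by auto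
  moreover have "{v, s v} \<noteq> {v, s (s v)}" using s2ne[OF T] s_ne[OF T] by (auto simp: doubleton_eq_iff)
  ultimately show "v \<in> D" using deg2 by blast
qed

lemma card_TV: "card TV = 3 * t"
proof -
  have "card TV = sum card Ts" unfolding TV_def
  proof (rule card_Union_disjoint)
    show "pairwise disjnt Ts" unfolding pairwise_def disjnt_def using dt unfolding disjoint_triangles_def by blast
    fix A assume "A \<in> Ts" then show "finite A" using Ts_props(2) by (metis card.infinite zero_neq_numeral)
  qed
  also have "\<dots> = sum (\<lambda>_. 3) Ts" using Ts_props(2) by simp
  also have "\<dots> = 3 * card Ts" by simp
  finally show ?thesis using dt unfolding disjoint_triangles_def by simp
qed

lemma card_C: "card C = n2 V E - t"
proof -
  have fin1: "finite (D - TV)" using finD by simp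
  have fin2: "finite (Ts \<times> (UNIV :: bool set))" using finTs by simp
  have "card C = card (D - TV) + card (Ts \<times> (UNIV :: bool set))" unfolding C_def using card_Plus fin1 fin2 by blast
  also have "card (D - TV) = card D - 3 * t" using card_Diff_subset[OF _ TV_D] card_TV finite_subset[OF TV_D finD] by simp
  also have "card (Ts \<times> (UNIV :: bool set)) = 2 * t" using dt by (simp add: disjoint_triangles_def card_cartesian_product)
  also have "card D = n2 V E" unfolding D_def n2_def ..
  finally have "card C = n2 V E - 3 * t + 2 * t" .
  moreover have "3 * t \<le> n2 V E" using card_mono[OF finD TV_D] card_TV unfolding D_def n2_def by simp
  ultimately show ?thesis by simp
qed

lemma col_C: assumes "\<epsilon> \<in> line_graph_edges E" shows "col \<epsilon> \<in> C"
proof -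
  obtain g h where gh: "\<epsilon> = {g, h}" "g \<in> E" "h \<in> E" "g \<noteq> h" "g \<inter> h \<noteq> {}"
    using assms unfolding line_graph_edges_def by blast
  then obtain v where v: "v \<in> g" "v \<in> h" by blast
  have sv: "sv \<epsilon> = v" using sv_eq gh v by simp
  have vD: "v \<in> D" using deg2 gh v by blast
  show ?thesis
  proof (cases "v \<in> TV")
    case True
    then obtain T where T: "T \<in> Ts" "v \<in> T" unfolding TV_def by blast
    then have "Tof v = T" using Tof_eq by blast
    then show ?thesis unfolding col_def Let_def sv C_def using True T by auto
  next
    case False
    then show ?thesis unfolding col_def Let_def sv C_def using vD by auto
  qed
qed

lemma colouring: "\<exists>c. (\<forall>\<epsilon>\<in>line_graph_edges E. c \<epsilon> < n2 V E - t) \<and> rainbow_connected E (line_graph_edges E) c"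
proof -
  have "finite C" unfolding C_def using finD finTs by simp
  then obtain \<phi> where phi: "bij_betw \<phi> C {0..<card C}" using ex_bij_betw_finite_nat by blast
  define c where "c = \<phi> \<circ> col"
  have lt: "\<forall>\<epsilon>\<in>line_graph_edges E. c \<epsilon> < n2 V E - t"
    using phi col_C card_C unfolding c_def bij_betw_def by auto
  have "rainbow_connected E (line_graph_edges E) c" unfolding rainbow_connected_def rainbow_path_def
  proof (intro ballI)
    fix e f assume "e \<in> E" "f \<in> E"
    then obtain ys where ys: "is_path E (line_graph_edges E) ys e f" "distinct (map col (path_edges ys))"
      using Lpath_all by blast
    have "set (path_edges ys) \<subseteq> line_graph_edges E" using ys(1) unfolding is_path_def by blast
    then have "col ` set (path_edges ys) \<subseteq> C" using col_C by auto
    then have "inj_on \<phi> (col ` set (path_edges ys))" using phi unfolding bij_betw_def by (meson inj_on_subset)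
    then have "distinct (map \<phi> (map col (path_edges ys)))" using ys(2)
      by (simp only: distinct_map set_map)
    then have "distinct (map c (path_edges ys))" unfolding c_def by simp
    then show "\<exists>xs. is_path E (line_graph_edges E) xs e f \<and> distinct (map c (path_edges xs))" using ys(1) by blast
  qed
  then show ?thesis using lt by blast
qed

lemma rc_bound: "rc E (line_graph_edges E) \<le> n2 V E - t"
proof -
  obtain c where c: "\<forall>\<epsilon>\<in>line_graph_edges E. c \<epsilon> < n2 V E - t" "rainbow_connected E (line_graph_edges E) c"
    using colouring by blast
  show ?thesis unfolding rc_def by (rule Least_le) (use c in blast)
qed

end



definition EE :: "nat \<Rightarrow> nat set set" where
  "EE t = {{j, Suc j} | j. j < 3*t} \<union> {{3*i+1, 3*i+3} | i. i < t}"

definition TT :: "nat \<Rightarrow> nat set set" where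
  "TT t = {{3*i+1, 3*i+2, 3*i+3} | i. i < t}"

definition lev :: "nat set \<Rightarrow> nat" where "lev x = (2 * Min x + 2) div 3"

lemma lev_path: "lev {j, Suc j} = (2 * j + 2) div 3" unfolding lev_def by simp
lemma lev_chord: "lev {3*i+1, 3*i+3} = 2 * i + 1" unfolding lev_def by simp

lemma lip: assumes "g \<in> EE t" "h \<in> EE t" "v \<in> g" "v \<in> h" shows "lev h \<le> lev g + 1"
proof -
  consider (p) a where "g = {a, Suc a}" | (c) i where "g = {3*i+1, 3*i+3}" using assms(1) unfolding EE_def by blast
  then show ?thesis
  proof cases
    case p
    consider (pp) b where "h = {b, Suc b}" | (pc) k where "h = {3*k+1, 3*k+3}" using assms(2) unfolding EE_def by blast
    then show ?thesis
    proof cases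
      case pp
      then have "b \<le> Suc a" using p assms by auto
      then show ?thesis unfolding p pp lev_path by presburger
    next
      case pc
      then have "3 * k \<le> a" using p assms by auto
      then show ?thesis unfolding p pc lev_path lev_chord by presburger
    qed
  next
    case c
    consider (cp) b where "h = {b, Suc b}" | (cc) k where "h = {3*k+1, 3*k+3}" using assms(2) unfolding EE_def by blast
    then show ?thesis
    proof cases
      case cp
      then have "b \<le> 3 * i + 3" using c assms by auto
      then show ?thesis unfolding c cp lev_path lev_chord by presburger
    next
      case cc
      then have "k = i" using c assms by auto
      then show ?thesis unfolding c cc lev_chord by simp
    qed
  qed
qed


lemma LE_mem: "{a, b} \<in> line_graph_edges E \<Longrightarrow> a \<in> E \<and> b \<in> E \<and> a \<inter> b \<noteq> {}"
  unfolding line_graph_edges_def by (auto simp: doubleton_eq_iff)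

lemma lev_walk:
  assumes "\<And>i. Suc i < length ys \<Longrightarrow> {ys!i, ys!Suc i} \<in> line_graph_edges (EE t)"
  shows "k < length ys \<Longrightarrow> lev (ys!k) \<le> lev (ys!0) + k"
proof (induction k)
  case 0 then show ?case by simp
next
  case (Suc k)
  then have "{ys!k, ys!Suc k} \<in> line_graph_edges (EE t)" using assms by simp
  then have m: "ys!k \<in> EE t" "ys!Suc k \<in> EE t" "ys!k \<inter> ys!Suc k \<noteq> {}" using LE_mem by blast+
  then obtain v where "v \<in> ys!k" "v \<in> ys!Suc k" by blast
  then have "lev (ys!Suc k) \<le> lev (ys!k) + 1" using lip m by blast
  then show ?case using Suc by simp
qed

lemma G_simple: "simple_graph {0..3*t} (EE t)"
  unfolding simple_graph_def EE_def by auto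

lemma upt_path: assumes "u \<le> v" "v \<le> 3*t" shows "is_path {0..3*t} (EE t) [u..<Suc v] u v"
  unfolding is_path_iff gpath_def
proof (intro conjI allI impI)
  fix i assume "Suc i < length [u..<Suc v]"
  then have "i < v - u" by (simp del: upt_Suc)
  then have "{[u..<Suc v]!i, [u..<Suc v]!Suc i} = {u+i, Suc (u+i)}" "u + i < 3*t" using assms by (auto simp: nth_upt simp del: upt_Suc)
  then show "{[u..<Suc v]!i, [u..<Suc v]!Suc i} \<in> EE t" unfolding EE_def by blast
qed (use assms in \<open>auto simp: hd_upt simp del: upt_Suc\<close>)

lemma down_path: assumes "v < u" "u \<le> 3*t" shows "is_path {0..3*t} (EE t) (map (\<lambda>i. u - i) [0..<Suc (u - v)]) u v"
  unfolding is_path_iff gpath_def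
proof (intro conjI allI impI)
  show "distinct (map (\<lambda>i. u - i) [0..<Suc (u - v)])" unfolding distinct_map
    by (auto simp: inj_on_def)
  show "hd (map (\<lambda>i. u - i) [0..<Suc (u - v)]) = u" by (simp add: hd_map del: upt_Suc)
  show "last (map (\<lambda>i. u - i) [0..<Suc (u - v)]) = v" using assms by (simp add: last_map del: upt_Suc)
  show "set (map (\<lambda>i. u - i) [0..<Suc (u - v)]) \<subseteq> {0..3*t}" using assms by auto
  fix i assume "Suc i < length (map (\<lambda>i. u - i) [0..<Suc (u - v)])"
  then have i: "i < u - v" by (simp del: upt_Suc)
  then have "{(map (\<lambda>i. u - i) [0..<Suc (u - v)])!i, (map (\<lambda>i. u - i) [0..<Suc (u - v)])!Suc i}
     = {u - Suc i, Suc (u - Suc i)}" "u - Suc i < 3*t" using assms by (auto simp del: upt_Suc)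
  then show "{(map (\<lambda>i. u - i) [0..<Suc (u - v)])!i, (map (\<lambda>i. u - i) [0..<Suc (u - v)])!Suc i} \<in> EE t"
    unfolding EE_def by blast
qed simp

lemma G_conn: "connected_graph {0..3*t} (EE t)"
  unfolding connected_graph_def
proof (intro conjI ballI)
  show "{0..3*t} \<noteq> {}" by simp
  fix u v assume uv: "u \<in> {0..3*t}" "v \<in> {0..3*t}"
  show "\<exists>xs. is_path {0..3*t} (EE t) xs u v"
  proof (cases "u \<le> v")
    case True then show ?thesis using upt_path uv by auto
  next
    case False then show ?thesis using down_path[of v u t] uv by auto
  qed
qed



lemma EE_p: "j < 3*t \<Longrightarrow> {j, Suc j} \<in> EE t" unfolding EE_def by blast
lemma EE_c: "i < t \<Longrightarrow> {3*i+1, 3*i+3} \<in> EE t" unfolding EE_def by blast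

lemma TT_img: "TT t = (\<lambda>i. {3*i+1, 3*i+2, 3*i+3}) ` {..<t}" unfolding TT_def by auto

lemma G_tri: "disjoint_triangles {0..3*t} (EE t) (TT t) t"
  unfolding disjoint_triangles_def
proof (intro conjI ballI impI)
  have "inj_on (\<lambda>i. {3*i+1, 3*i+2, 3*i+3}) {..<t}"
  proof (rule inj_onI)
    fix i j :: nat assume "{3*i+1, 3*i+2, 3*i+3} = {3*j+1, 3*j+2, 3*j+3}"
    then have "3*i+1 \<in> {3*j+1, 3*j+2, 3*j+3}" by blast
    then show "i = j" by auto
  qed
  then show "card (TT t) = t" unfolding TT_img by (simp add: card_image)
next
  fix T assume "T \<in> TT t"
  then obtain i where i: "i < t" "T = {3*i+1, 3*i+2, 3*i+3}" unfolding TT_def by blast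
  show "T \<subseteq> {0..3*t}" using i by auto
  have e1: "{3*i+1, 3*i+2} \<in> EE t" using EE_p[of "3*i+1" t] i by simp
  have e2: "{3*i+2, 3*i+3} \<in> EE t"
  proof -
    have eq: "{3*i+2, 3*i+3} = {3*i+2, Suc (3*i+2)}" by (simp add: eval_nat_numeral)
    show ?thesis unfolding eq by (rule EE_p) (use i in simp)
  qed
  have e3: "{3*i+1, 3*i+3} \<in> EE t" using EE_c[of i t] i by simp
  show "triangle (EE t) T" unfolding triangle_def
  proof (intro conjI ballI impI)
    show "card T = 3" using i by simp
    fix x y assume "x \<in> T" "y \<in> T" "x \<noteq> y"
    then show "{x, y} \<in> EE t" using i e1 e2 e3 by (auto simp: insert_commute)
  qed
next
  fix T T' assume "T \<in> TT t" "T' \<in> TT t" "T \<noteq> T'"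
  then obtain i j where "T = {3*i+1, 3*i+2, 3*i+3}" "T' = {3*j+1, 3*j+2, 3*j+3}" "i \<noteq> j"
    unfolding TT_def by blast
  then show "T \<inter> T' = {}" by auto
qed

lemma finEE: "finite (EE t)"
proof -
  have "EE t \<subseteq> Pow {0..3*t}" unfolding EE_def by auto
  then show ?thesis by (meson finite_Pow_iff finite_atLeastAtMost finite_subset)
qed

lemma G_n2: assumes "1 \<le> t" shows "n2 {0..3*t} (EE t) = 3*t"
proof -
  have "{v \<in> {0..3*t}. 2 \<le> degree (EE t) v} = {1..3*t}"
  proof (intro equalityI subsetI)
    fix v assume v: "v \<in> {v \<in> {0..3*t}. 2 \<le> degree (EE t) v}"
    have "{e \<in> EE t. 0 \<in> e} \<subseteq> {{0, 1}}" unfolding EE_def by auto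
    then have "degree (EE t) 0 \<le> 1" unfolding degree_def
      by (metis (no_types, lifting) card.empty card.insert card_mono empty_iff finite.intros(1) finite.intros(2) One_nat_def)
    moreover have "2 \<le> degree (EE t) v" using v by simp
    ultimately have "v \<noteq> 0" by (metis Suc_1 not_less_eq_eq)
    then show "v \<in> {1..3*t}" using v by auto
  next
    fix v assume v: "v \<in> {1..3*t}"
    have "v - 1 < 3*t" using v by auto
    then have "{v - 1, Suc (v - 1)} \<in> EE t" by (rule EE_p)
    then have a: "{v - 1, v} \<in> EE t" using v by simp
    obtain b where b: "b \<in> EE t" "v \<in> b" "b \<noteq> {v - 1, v}"
    proof (cases "v < 3*t")
      case True
      then have "{v, Suc v} \<in> EE t" by (rule EE_p)
      moreover have "{v, Suc v} \<noteq> {v - 1, v}" using v by (auto simp: doubleton_eq_iff)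
      ultimately show ?thesis using that by blast
    next
      case False
      then have vt: "v = 3*t" using v by simp
      have "{3*(t-1)+1, 3*(t-1)+3} \<in> EE t" using EE_c[of "t-1" t] assms by simp
      moreover have "3*(t-1)+3 = v" using vt assms by simp
      moreover have "{3*(t-1)+1, 3*(t-1)+3} \<noteq> {v - 1, v}" using vt assms by (auto simp: doubleton_eq_iff)
      ultimately show ?thesis using that by blast
    qed
    have "{{v - 1, v}, b} \<subseteq> {e \<in> EE t. v \<in> e}" using a b by auto
    then have "card {{v - 1, v}, b} \<le> degree (EE t) v" unfolding degree_def using finEE by (simp add: card_mono)
    then have "2 \<le> degree (EE t) v" using b(3) by simp
    then show "v \<in> {v \<in> {0..3*t}. 2 \<le> degree (EE t) v}" using v by simp
  qed
  then show ?thesis unfolding n2_def by simp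
qed

lemma G_low:
  assumes t: "1 \<le> t" and c: "\<forall>\<epsilon>\<in>line_graph_edges (EE t). c \<epsilon> < k"
    and rc: "rainbow_connected (EE t) (line_graph_edges (EE t)) c"
  shows "2 * t \<le> k"
proof -
  define u where "u = {0::nat, 1}"
  define w where "w = {3*t - 1, 3*t}"
  have uE: "u \<in> EE t" using EE_p[of 0 t] t unfolding u_def by simp
  have w': "w = {3*t - 1, Suc (3*t - 1)}" using t unfolding w_def by simp
  have wE: "w \<in> EE t" using EE_p[of "3*t - 1" t] t unfolding w' by simp
  obtain ys where ys: "is_path (EE t) (line_graph_edges (EE t)) ys u w" "distinct (map c (path_edges ys))"
    using rc uE wE unfolding rainbow_connected_def rainbow_path_def by blast
  have g: "gpath (line_graph_edges (EE t)) ys" and h: "hd ys = u" and l: "last ys = w"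
    using ys(1) unfolding is_path_iff by auto
  have ne: "ys \<noteq> []" using g by (simp add: gpath_def)
  define N where "N = length ys"
  have N: "0 < N" using ne unfolding N_def by simp
  have "lev (ys!(N-1)) \<le> lev (ys!0) + (N-1)"
    by (rule lev_walk) (use g N in \<open>auto simp: gpath_def N_def\<close>)
  moreover have "ys!(N-1) = w" using l ne unfolding N_def by (simp add: last_conv_nth)
  moreover have "ys!0 = u" using h ne by (simp add: hd_conv_nth)
  moreover have "lev u = 0" unfolding u_def using lev_path[of 0] by simp
  moreover have "lev w = 2 * t" unfolding w' lev_path using t by simp
  ultimately have le1: "2 * t \<le> N - 1" by simp
  have "set (path_edges ys) \<subseteq> line_graph_edges (EE t)" using ys(1) unfolding is_path_def by blast
  then have "set (map c (path_edges ys)) \<subseteq> {..<k}" using c by auto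
  then have "card (set (map c (path_edges ys))) \<le> k" by (metis card_lessThan card_mono finite_lessThan)
  then have "length (path_edges ys) \<le> k" using distinct_card[OF ys(2)] by simp
  moreover have "length (path_edges ys) = N - 1" unfolding path_edges_def N_def by simp
  ultimately show ?thesis using le1 by simp
qed




lemma s_exists:
  assumes "disjoint_triangles V E Ts t"
  shows "\<exists>s. \<forall>T\<in>Ts. \<forall>v\<in>T. s v \<in> T \<and> s v \<noteq> v \<and> s (s v) \<noteq> v"
proof -
  have ex1: "\<forall>T\<in>Ts. \<exists>g. \<forall>v\<in>T. g v \<in> T \<and> g v \<noteq> v \<and> g (g v) \<noteq> v"
  proof
    fix T assume "T \<in> Ts"
    then have "card T = 3" using assms unfolding disjoint_triangles_def triangle_def by blast
    then obtain a b c where abc: "T = {a,b,c}" "a \<noteq> b" "b \<noteq> c" "a \<noteq> c" unfolding card_3_iff by blast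
    define g where "g = (\<lambda>x. if x = a then b else if x = b then c else a)"
    have "\<forall>v\<in>T. g v \<in> T \<and> g v \<noteq> v \<and> g (g v) \<noteq> v" unfolding g_def abc using abc by auto
    then show "\<exists>g. \<forall>v\<in>T. g v \<in> T \<and> g v \<noteq> v \<and> g (g v) \<noteq> v" by blast
  qed
  then obtain F where F: "\<forall>T\<in>Ts. \<forall>v\<in>T. F T v \<in> T \<and> F T v \<noteq> v \<and> F T (F T v) \<noteq> v"
    using bchoice[OF ex1] by blast
  define Tof where "Tof v = (THE T. T \<in> Ts \<and> v \<in> T)" for v
  have Tof: "Tof v = T" if "T \<in> Ts" "v \<in> T" for T v
    unfolding Tof_def
  proof (rule the_equality)
    show "T \<in> Ts \<and> v \<in> T" using that by simp
    fix T' assume "T' \<in> Ts \<and> v \<in> T'"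
    then show "T' = T" using that assms unfolding disjoint_triangles_def by blast
  qed
  define s where "s v = F (Tof v) v" for v
  have "\<forall>T\<in>Ts. \<forall>v\<in>T. s v \<in> T \<and> s v \<noteq> v \<and> s (s v) \<noteq> v"
  proof (intro ballI)
    fix T v assume T: "T \<in> Ts" "v \<in> T"
    have sv: "s v = F T v" unfolding s_def using Tof T by simp
    have "F T v \<in> T" using F T by blast
    then have ssv: "s (s v) = F T (F T v)" unfolding sv s_def using Tof T by simp
    have "F T v \<in> T \<and> F T v \<noteq> v \<and> F T (F T v) \<noteq> v" using F T by simp
    moreover have ssv': "s (F T v) = F T (F T v)" using ssv sv by simp
    ultimately show "s v \<in> T \<and> s v \<noteq> v \<and> s (s v) \<noteq> v" unfolding sv ssv' by simp
  qed
  then show ?thesis by blast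
qed

lemma part1:
  assumes "simple_graph V E" "connected_graph V E" "disjoint_triangles V E Ts t"
  shows "rc E (line_graph_edges E) \<le> n2 V E - t"
proof -
  obtain s where s: "\<forall>T\<in>Ts. \<forall>v\<in>T. s v \<in> T \<and> s v \<noteq> v \<and> s (s v) \<noteq> v"
    using s_exists[OF assms(3)] by blast
  interpret tri_setting V E Ts t s
  proof (unfold_locales)
    show "simple_graph V E" "connected_graph V E" "disjoint_triangles V E Ts t" using assms by simp_all
    fix T v assume "T \<in> Ts" "v \<in> T"
    then show "s v \<in> T" "s v \<noteq> v" "s (s v) \<noteq> v" using s by blast+
  qed
  show ?thesis by (rule rc_bound)
qed

lemma part2:
  assumes "0 < t"
  shows "\<exists>(V :: nat set) E Ts. simple_graph V E \<and> connected_graph V E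
            \<and> disjoint_triangles V E Ts t \<and> rc E (line_graph_edges E) = n2 V E - t"
proof (intro exI conjI)
  show sg: "simple_graph {0..3*t} (EE t)" by (rule G_simple)
  show cg: "connected_graph {0..3*t} (EE t)" by (rule G_conn)
  show dg: "disjoint_triangles {0..3*t} (EE t) (TT t) t" by (rule G_tri)
  have t1: "1 \<le> t" using assms by simp
  have hn2: "n2 {0..3*t} (EE t) = 3*t" using G_n2[OF t1] .
  have up: "rc (EE t) (line_graph_edges (EE t)) \<le> 2*t" using part1[OF sg cg dg] hn2 by simp
  obtain s where s: "\<forall>T\<in>TT t. \<forall>v\<in>T. s v \<in> T \<and> s v \<noteq> v \<and> s (s v) \<noteq> v"
    using s_exists[OF dg] by blast
  interpret tri_setting "{0..3*t}" "EE t" "TT t" t s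
  proof (unfold_locales)
    show "simple_graph {0..3*t} (EE t)" "connected_graph {0..3*t} (EE t)" "disjoint_triangles {0..3*t} (EE t) (TT t) t" using sg cg dg by simp_all
    fix T v assume "T \<in> TT t" "v \<in> T"
    then show "s v \<in> T" "s v \<noteq> v" "s (s v) \<noteq> v" using s by blast+
  qed
  obtain c where "\<forall>\<epsilon>\<in>line_graph_edges (EE t). c \<epsilon> < n2 {0..3*t} (EE t) - t"
      "rainbow_connected (EE t) (line_graph_edges (EE t)) c" using colouring by blast
  then have ex: "\<exists>k c. (\<forall>\<epsilon>\<in>line_graph_edges (EE t). c \<epsilon> < k) \<and> rainbow_connected (EE t) (line_graph_edges (EE t)) c"
    by blast
  have "\<exists>c. (\<forall>\<epsilon>\<in>line_graph_edges (EE t). c \<epsilon> < rc (EE t) (line_graph_edges (EE t))) \<and>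
      rainbow_connected (EE t) (line_graph_edges (EE t)) c"
    unfolding rc_def using LeastI_ex[OF ex] .
  then have "2*t \<le> rc (EE t) (line_graph_edges (EE t))" using G_low[OF t1] by blast
  then show "rc (EE t) (line_graph_edges (EE t)) = n2 {0..3*t} (EE t) - t" using up hn2 by simp
qed

theorem corollary3p2:
  shows "(\<forall>(V :: 'a set) E Ts t'. simple_graph V E \<and> connected_graph V E
            \<and> disjoint_triangles V E Ts t'
          \<longrightarrow> rc E (line_graph_edges E) \<le> n2 V E - t')
       \<and> (\<forall>t' :: nat. t' > 0 \<longrightarrow>
          (\<exists>(V :: nat set) E Ts. simple_graph V E \<and> connected_graph V E
            \<and> disjoint_triangles V E Ts t'
            \<and> rc E (line_graph_edges E) = n2 V E - t'))"
proof (intro conjI allI impI)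
  fix V :: "'a set" and E Ts t'
  assume "simple_graph V E \<and> connected_graph V E \<and> disjoint_triangles V E Ts t'"
  then show "rc E (line_graph_edges E) \<le> n2 V E - t'" using part1 by blast
next
  fix t' :: nat assume "t' > 0"
  then show "\<exists>(V :: nat set) E Ts. simple_graph V E \<and> connected_graph V E
            \<and> disjoint_triangles V E Ts t' \<and> rc E (line_graph_edges E) = n2 V E - t'"
    by (rule part2)
qed


end
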